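(* Let $(\mathfrak{n},J,\langle\cdot,\cdot\rangle)$ be a Hermitian real nilpotent Lie algebra with $\dim\mathfrak{n}=2d$ and $\dim[\mathfrak{n},\mathfrak{n}]=1$. Then $\langle\cdot,\cdot\rangle$ is pluriclosed if and only if $\mathfrak{n}$ is isomorphic to $\mathbb{R}^{2d-3}\oplus\mathfrak{h}_3$.
   Context: $\mathfrak{h}_{2m+1}$ is the Heisenberg Lie algebra with basis $x_1,\dots,x_m,y_1,\dots,y_m,z$ and nonzero brackets $[x_i,y_i]=-[y_i,x_i]=z$; $\mathbb{R}^k$ denotes the $k$-dimensional abelian Lie algebra. A complex structure is a linear map $J$ with $J^2=-I$ and $[x,y]+J([Jx,y]+[x,Jy])-[Jx,Jy]=0$ for all $x,y$; $\langle\cdot,\cdot\rangle$ is Hermitian if $\langle Jx,Jy\rangle=\langle x,y\rangle$. Torsion 3-form: $c(x,y,z)=-\langle[Jx,Jy],z\rangle-\langle[Jy,Jz],x\rangle-\langle[Jz,Jx],y\rangle$; $\langle\cdot,\cdot\rangle$ is pluriclosed if $dc=0$ for the Chevalley–Eilenberg differential $d$. *)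

theory Defs
  imports "HOL-Analysis.Analysis"
begin

definition lie_algebra :: "('a::euclidean_space \<Rightarrow> 'a \<Rightarrow> 'a) \<Rightarrow> bool" where
  "lie_algebra br \<longleftrightarrow> bilinear br \<and> (\<forall>x. br x x = 0) \<and>
     (\<forall>x y z. br x (br y z) + br y (br z x) + br z (br x y) = 0)"

fun lower_central :: "('a::euclidean_space \<Rightarrow> 'a \<Rightarrow> 'a) \<Rightarrow> nat \<Rightarrow> 'a set" where
  "lower_central br 0 = UNIV"
| "lower_central br (Suc k) = span {br x y | x y. y \<in> lower_central br k}"

definition nilpotent_lie :: "('a::euclidean_space \<Rightarrow> 'a \<Rightarrow> 'a) \<Rightarrow> bool" where
  "nilpotent_lie br \<longleftrightarrow> (\<exists>k. lower_central br k = {0})"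

definition derived :: "('a::euclidean_space \<Rightarrow> 'a \<Rightarrow> 'a) \<Rightarrow> 'a set" where
  "derived br = span {br x y | x y. True}"

definition complex_structure :: "('a::euclidean_space \<Rightarrow> 'a \<Rightarrow> 'a) \<Rightarrow> ('a \<Rightarrow> 'a) \<Rightarrow> bool" where
  "complex_structure br J \<longleftrightarrow> linear J \<and> (\<forall>x. J (J x) = - x) \<and>
     (\<forall>x y. br x y + J (br (J x) y + br x (J y)) - br (J x) (J y) = 0)"

text \<open>Inner product (not necessarily the one of the type 'a): symmetric positive definite bilinear form.\<close>
definition inner_product_form :: "('a::euclidean_space \<Rightarrow> 'a \<Rightarrow> real) \<Rightarrow> bool" where
  "inner_product_form g \<longleftrightarrow> bilinear g \<and> (\<forall>x y. g x y = g y x) \<and> (\<forall>x. x \<noteq> 0 \<longrightarrow> g x x > 0)"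

definition hermitian :: "('a::euclidean_space \<Rightarrow> 'a) \<Rightarrow> ('a \<Rightarrow> 'a \<Rightarrow> real) \<Rightarrow> bool" where
  "hermitian J g \<longleftrightarrow> inner_product_form g \<and> (\<forall>x y. g (J x) (J y) = g x y)"

definition torsion :: "('a::euclidean_space \<Rightarrow> 'a \<Rightarrow> 'a) \<Rightarrow> ('a \<Rightarrow> 'a) \<Rightarrow> ('a \<Rightarrow> 'a \<Rightarrow> real)
    \<Rightarrow> 'a \<Rightarrow> 'a \<Rightarrow> 'a \<Rightarrow> real" where
  "torsion br J g x y z = - g (br (J x) (J y)) z - g (br (J y) (J z)) x - g (br (J z) (J x)) y"

definition ce_d3 :: "('a::euclidean_space \<Rightarrow> 'a \<Rightarrow> 'a) \<Rightarrow> ('a \<Rightarrow> 'a \<Rightarrow> 'a \<Rightarrow> real)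
    \<Rightarrow> 'a \<Rightarrow> 'a \<Rightarrow> 'a \<Rightarrow> 'a \<Rightarrow> real" where
  "ce_d3 br c x0 x1 x2 x3 =
      - c (br x0 x1) x2 x3 + c (br x0 x2) x1 x3 - c (br x0 x3) x1 x2
      - c (br x1 x2) x0 x3 + c (br x1 x3) x0 x2 - c (br x2 x3) x0 x1"

definition pluriclosed :: "('a::euclidean_space \<Rightarrow> 'a \<Rightarrow> 'a) \<Rightarrow> ('a \<Rightarrow> 'a) \<Rightarrow> ('a \<Rightarrow> 'a \<Rightarrow> real) \<Rightarrow> bool" where
  "pluriclosed br J g \<longleftrightarrow> (\<forall>x0 x1 x2 x3. ce_d3 br (torsion br J g) x0 x1 x2 x3 = 0)"

definition lie_iso :: "('a::real_vector \<Rightarrow> 'a \<Rightarrow> 'a) \<Rightarrow> ('b::real_vector \<Rightarrow> 'b \<Rightarrow> 'b) \<Rightarrow> ('a \<Rightarrow> 'b) \<Rightarrow> bool" where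
  "lie_iso br1 br2 f \<longleftrightarrow> linear f \<and> bij f \<and> (\<forall>x y. f (br1 x y) = br2 (f x) (f y))"

text \<open>The model Lie algebra R^k (+) h_3 on (real^'k) \<times> (x, y, z), with [x,y] = z.\<close>
definition ab_heis3_br :: "(real^'k) \<times> real \<times> real \<times> real \<Rightarrow> (real^'k) \<times> real \<times> real \<times> real
    \<Rightarrow> (real^'k) \<times> real \<times> real \<times> real" where
  "ab_heis3_br u v = (0, 0, 0,
      fst (snd u) * fst (snd (snd v)) - fst (snd (snd u)) * fst (snd v))"

end

theory Submission
  imports Defs
begin


lemma br_antisym:
  assumes "lie_algebra br" shows "br x y = - br y x"
proof -
  have b: "bilinear br" and z: "\<And>x. br x x = 0" using assms unfolding lie_algebra_def by auto
  have "0 = br (x+y) (x+y)" using z by simp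
  also have "\<dots> = br x x + br x y + br y x + br y y"
    using bilinear_ladd[OF b] bilinear_radd[OF b] by (simp add: algebra_simps)
  finally show ?thesis using z by (simp add: eq_neg_iff_add_eq_0)
qed

lemma J_indep:
  fixes J :: "'a::euclidean_space \<Rightarrow> 'a"
  assumes "linear J" "\<And>x. J (J x) = - x" "e \<noteq> 0" "p *\<^sub>R e + q *\<^sub>R J e = 0"
  shows "p = 0 \<and> q = 0"
proof -
  have q: "q = 0"
  proof (rule ccontr)
    assume q: "q \<noteq> 0"
    have "q *\<^sub>R J e = (- p) *\<^sub>R e" using assms(4) by (simp add: eq_neg_iff_add_eq_0 add.commute)
    then have "(1/q) *\<^sub>R (q *\<^sub>R J e) = (1/q) *\<^sub>R ((- p) *\<^sub>R e)" by simp
    then have Je: "J e = (- p / q) *\<^sub>R e" using q by simp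
    have "- e = J (J e)" using assms(2) by simp
    also have "\<dots> = J ((- p / q) *\<^sub>R e)" using Je by (rule arg_cong)
    also have "\<dots> = (- p / q) *\<^sub>R J e" by (rule linear_cmul[OF assms(1)])
    also have "\<dots> = (- p / q) *\<^sub>R ((- p / q) *\<^sub>R e)" using Je by (rule arg_cong)
    also have "\<dots> = ((p/q)^2) *\<^sub>R e" by (simp add: power2_eq_square)
    finally have "(1 + (p/q)^2) *\<^sub>R e = 0" by (metis scaleR_left_distrib scaleR_one neg_eq_iff_add_eq_0)
    moreover have "1 + (p/q)^2 \<noteq> 0" by (metis add_pos_nonneg less_irrefl zero_le_power2 zero_less_one)
    ultimately show False using assms(3) by simp
  qed
  then show ?thesis using assms(3,4) by simp
qed


lemma structure_lemma:
  fixes br :: "'a::euclidean_space \<Rightarrow> 'a \<Rightarrow> 'a"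
  assumes la: "lie_algebra br" and nil: "nilpotent_lie br" and cs: "complex_structure br J"
    and dd: "dim (derived br) = 1"
  obtains e \<beta> where "e \<noteq> 0" "bilinear \<beta>" "\<And>x y. br x y = \<beta> x y *\<^sub>R e"
    "\<And>x. \<beta> x e = 0" "\<And>x. \<beta> e x = 0" "\<And>x y. \<beta> (J x) (J y) = \<beta> x y"
    "\<And>x y. \<beta> x y = - \<beta> y x" "\<exists>a b. \<beta> a b = 1"
proof -
  have b: "bilinear br" using la unfolding lie_algebra_def by auto
  obtain B where B: "B \<subseteq> derived br" "independent B" "derived br \<subseteq> span B" "card B = 1"
    using basis_exists[of "derived br"] dd by auto
  then obtain e where Be: "B = {e}" by (meson card_1_singletonE)
  have e0: "e \<noteq> 0" using B(2) Be by auto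
  define \<beta> where "\<beta> x y = (br x y \<bullet> e) / (e \<bullet> e)" for x y
  have ee: "e \<bullet> e \<noteq> 0" using e0 by simp
  have brb: "br x y = \<beta> x y *\<^sub>R e" for x y
  proof -
    have "br x y \<in> derived br" unfolding derived_def by (rule span_base) auto
    then have "br x y \<in> span {e}" using B(3) Be by auto
    then obtain k where k: "br x y = k *\<^sub>R e" by (auto simp: span_singleton)
    then show ?thesis using ee by (simp add: \<beta>_def)
  qed
  have bil: "bilinear \<beta>"
    unfolding bilinear_def
  proof (intro allI conjI linearI)
    fix x y z :: 'a and c :: real
    show "\<beta> (x + y) z = \<beta> x z + \<beta> y z" "\<beta> (c *\<^sub>R x) z = c *\<^sub>R \<beta> x z"
      "\<beta> z (x + y) = \<beta> z x + \<beta> z y" "\<beta> z (c *\<^sub>R x) = c *\<^sub>R \<beta> z x"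
      unfolding \<beta>_def
      by (simp_all add: bilinear_ladd[OF b] bilinear_radd[OF b] bilinear_lmul[OF b] bilinear_rmul[OF b]
          inner_add_left add_divide_distrib)
  qed
  have anti: "\<beta> x y = - \<beta> y x" for x y
    unfolding \<beta>_def using br_antisym[OF la, of x y] by (simp add: inner_minus_left)
  have cen: "\<beta> x e = 0" for x
  proof (rule ccontr)
    assume nz: "\<beta> x e \<noteq> 0"
    have "e \<in> lower_central br k" for k
    proof (induction k)
      case 0 then show ?case by simp
    next
      case (Suc k)
      have "br x e \<in> lower_central br (Suc k)" using Suc by (auto intro!: span_base)
      then have "(1 / \<beta> x e) *\<^sub>R br x e \<in> lower_central br (Suc k)"
        by (simp add: span_mul)
      then show ?case using nz brb[of x e] by simp
    qed
    then show False using nil e0 unfolding nilpotent_lie_def by auto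
  qed
  have cen2: "\<beta> e x = 0" for x using anti[of e x] cen[of x] by simp
  have lJ: "linear J" and JJ: "\<And>x. J (J x) = - x"
    and N: "\<And>x y. br x y + J (br (J x) y + br x (J y)) - br (J x) (J y) = 0"
    using cs unfolding complex_structure_def by auto
  have inv: "\<beta> (J x) (J y) = \<beta> x y" for x y
  proof -
    have "(\<beta> x y - \<beta> (J x) (J y)) *\<^sub>R e + (\<beta> (J x) y + \<beta> x (J y)) *\<^sub>R J e = 0"
      using N[of x y] unfolding brb
      by (simp add: linear_cmul[OF lJ] linear_add[OF lJ] algebra_simps)
    from J_indep[OF lJ JJ e0 this] show ?thesis by simp
  qed
  have ex: "\<exists>a b. \<beta> a b = 1"
  proof (rule ccontr)
    assume "\<not> ?thesis"
    then have z: "\<beta> x y = 0" for x y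
      by (metis bilinear_rmul[OF bil] divide_inverse_commute right_inverse real_scaleR_def mult.commute)
    then have "{br x y | x y. True} = {0}" using brb by auto
    then have "derived br = {0}" unfolding derived_def by simp
    then show False using dd by simp
  qed
  show ?thesis using that[OF e0 bil brb cen cen2 inv anti ex] .
qed


definition plk :: "('a \<Rightarrow> 'a \<Rightarrow> real) \<Rightarrow> 'a \<Rightarrow> 'a \<Rightarrow> 'a \<Rightarrow> 'a \<Rightarrow> real" where
  "plk \<beta> x0 x1 x2 x3 = \<beta> x0 x1 * \<beta> x2 x3 - \<beta> x0 x2 * \<beta> x1 x3 + \<beta> x0 x3 * \<beta> x1 x2"

lemma pluri_iff:
  fixes br :: "'a::euclidean_space \<Rightarrow> 'a \<Rightarrow> 'a"
  assumes "e \<noteq> 0" "bilinear \<beta>" "\<And>x y. br x y = \<beta> x y *\<^sub>R e"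
    "\<And>x. \<beta> x e = 0" "\<And>x. \<beta> e x = 0" "\<And>x y. \<beta> (J x) (J y) = \<beta> x y"
    and lJ: "linear J" and h: "hermitian J g"
  shows "pluriclosed br J g \<longleftrightarrow> (\<forall>x0 x1 x2 x3. plk \<beta> x0 x1 x2 x3 = 0)"
proof -
  have gb: "bilinear g" and gp: "g e e > 0" using h assms(1)
    unfolding hermitian_def inner_product_form_def by auto
  have T: "torsion br J g x y z = - (\<beta> x y * g e z + \<beta> y z * g e x + \<beta> z x * g e y)" for x y z
    unfolding torsion_def assms(3) assms(6) using bilinear_lmul[OF gb] by simp
  have T2: "torsion br J g (c *\<^sub>R e) y z = - (\<beta> y z * c * g e e)" for c y z
    unfolding T using bilinear_lmul[OF assms(2)] bilinear_rmul[OF assms(2)] bilinear_rmul[OF gb] assms(4,5)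
    by simp
  have D: "ce_d3 br (torsion br J g) x0 x1 x2 x3 = 2 * g e e * plk \<beta> x0 x1 x2 x3" for x0 x1 x2 x3
    unfolding ce_d3_def assms(3)[of x0] assms(3)[of x1] assms(3)[of x2] T2 plk_def
    by (simp add: algebra_simps)
  show ?thesis unfolding pluriclosed_def D using gp by simp
qed


lemma iso_imp_plk:
  fixes br :: "'a::euclidean_space \<Rightarrow> 'a \<Rightarrow> 'a" and f :: "'a \<Rightarrow> (real^'k) \<times> real \<times> real \<times> real"
  assumes "e \<noteq> 0" "bilinear \<beta>" "\<And>x y. br x y = \<beta> x y *\<^sub>R e" "\<beta> a b = 1"
    and iso: "lie_iso br ab_heis3_br f"
  shows "plk \<beta> x0 x1 x2 x3 = 0"
proof -
  have lf: "linear f" and bf: "bij f" and hom: "\<And>x y. f (br x y) = ab_heis3_br (f x) (f y)"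
    using iso unfolding lie_iso_def by auto
  define B' where "B' u v = fst (snd u) * fst (snd (snd v)) - fst (snd (snd u)) * fst (snd v)"
    for u v :: "(real^'k) \<times> real \<times> real \<times> real"
  have eab: "br a b = e" using assms(3,4) by simp
  define t where "t = snd (snd (snd (f e)))"
  have fe: "f e = (0, 0, 0, t)" using hom[of a b] unfolding eab t_def ab_heis3_br_def by simp
  have t0: "t \<noteq> 0"
  proof
    assume "t = 0"
    then have "f e = f 0" using fe linear_0[OF lf] by (simp add: zero_prod_def)
    then show False using bf assms(1) unfolding bij_def inj_def by blast
  qed
  have key: "\<beta> x y * t = B' (f x) (f y)" for x y
  proof -
    have "f (br x y) = \<beta> x y *\<^sub>R f e" using assms(3) linear_cmul[OF lf] by simp
    then have "(0,0,0,\<beta> x y * t) = ab_heis3_br (f x) (f y)" using hom fe by simp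
    then show ?thesis unfolding ab_heis3_br_def B'_def by simp
  qed
  have "t^2 * plk \<beta> x0 x1 x2 x3 = plk B' (f x0) (f x1) (f x2) (f x3)"
    unfolding plk_def key[symmetric] by (simp add: algebra_simps power2_eq_square)
  also have "\<dots> = 0" unfolding plk_def B'_def by (simp add: algebra_simps)
  finally show ?thesis using t0 by simp
qed


lemma plk_imp_iso:
  fixes br :: "'a::euclidean_space \<Rightarrow> 'a \<Rightarrow> 'a"
  assumes e0: "e \<noteq> 0" and bil: "bilinear \<beta>" and brb: "\<And>x y. br x y = \<beta> x y *\<^sub>R e"
    and cen: "\<And>x. \<beta> x e = 0" and anti: "\<And>x y. \<beta> x y = - \<beta> y x" and ab: "\<beta> a b = 1"
    and pl: "\<And>x0 x1 x2 x3. plk \<beta> x0 x1 x2 x3 = 0"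
    and dims: "DIM('a) = CARD('k::finite) + 3"
  shows "\<exists>f :: 'a \<Rightarrow> (real^'k) \<times> real \<times> real \<times> real. lie_iso br ab_heis3_br f"
proof -
  define \<alpha> where "\<alpha> = \<beta> a"
  define \<gamma> where "\<gamma> = \<beta> b"
  have l\<alpha>: "linear \<alpha>" and l\<gamma>: "linear \<gamma>" using bil unfolding bilinear_def \<alpha>_def \<gamma>_def by auto
  have z: "\<beta> x x = 0" for x using anti[of x x] by simp
  have v: "\<alpha> a = 0" "\<alpha> b = 1" "\<alpha> e = 0" "\<gamma> a = -1" "\<gamma> b = 0" "\<gamma> e = 0"
    unfolding \<alpha>_def \<gamma>_def using z ab cen anti[of b a] by auto
  have rep: "\<beta> x y = \<alpha> x * \<gamma> y - \<alpha> y * \<gamma> x" for x y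
  proof -
    have "plk \<beta> a b x y = 0" by (rule pl)
    then show ?thesis unfolding plk_def \<alpha>_def \<gamma>_def ab using anti[of b x] anti[of b y]
      by (simp add: algebra_simps)
  qed
  define ua where "ua = adjoint \<alpha> 1"
  define ug where "ug = adjoint \<gamma> 1"
  have ua: "ua \<bullet> x = \<alpha> x" for x using adjoint_works[OF l\<alpha>, of x 1] unfolding ua_def
    by (simp add: inner_commute)
  have ug: "ug \<bullet> x = \<gamma> x" for x using adjoint_works[OF l\<gamma>, of x 1] unfolding ug_def
    by (simp add: inner_commute)
  define S where "S = {e, ug, ua}"
  define W where "W = {y. \<forall>x\<in>span S. orthogonal x y}"
  have memW: "y \<in> W \<longleftrightarrow> \<alpha> y = 0 \<and> \<gamma> y = 0 \<and> e \<bullet> y = 0" for y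
  proof
    assume "y \<in> W"
    then show "\<alpha> y = 0 \<and> \<gamma> y = 0 \<and> e \<bullet> y = 0"
    proof -
      have "ua \<in> span S" "ug \<in> span S" "e \<in> span S" unfolding S_def by (auto intro: span_base)
      then have "ua \<bullet> y = 0" "ug \<bullet> y = 0" "e \<bullet> y = 0" using \<open>y \<in> W\<close>
        unfolding W_def orthogonal_def by auto
      then show ?thesis using ua ug by simp
    qed
  next
    assume h: "\<alpha> y = 0 \<and> \<gamma> y = 0 \<and> e \<bullet> y = 0"
    show "y \<in> W" unfolding W_def
    proof (intro CollectI ballI)
      fix x assume "x \<in> span S"
      then have "orthogonal y x"
        by (rule orthogonal_to_span) (use h ua ug in \<open>auto simp: S_def orthogonal_def inner_commute[of y]\<close>)
      then show "orthogonal x y" by (simp add: orthogonal_commute)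
    qed
  qed
  have ee: "e \<bullet> e \<noteq> 0" using e0 by simp
  have ind: "independent S"
    unfolding S_def
  proof (intro independent_insertI)
    show "independent {}" by (rule independent_empty)
    show "ua \<notin> span {}" using ua[of b] v by auto
    show "ug \<notin> span {ua}"
    proof
      assume "ug \<in> span {ua}"
      then obtain k where "ug = k *\<^sub>R ua" by (auto simp: span_singleton)
      then have "ug \<bullet> a = k * (ua \<bullet> a)" by simp
      then show False using ua ug v by simp
    qed
    show "e \<notin> span {ug, ua}"
    proof
      assume "e \<in> span {ug, ua}"
      then have "orthogonal e e"
        by (rule orthogonal_to_span) (use ua ug v in \<open>auto simp: orthogonal_def inner_commute\<close>)
      then show False using ee by (simp add: orthogonal_def)
    qed
  qed
  have dist: "e \<noteq> ug" "e \<noteq> ua" "ug \<noteq> ua"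
    using ee ua[of e] ug[of e] ua[of a] ug[of a] v by auto
  have cS: "card S = 3" unfolding S_def using dist by simp
  have dS: "dim (span S) = 3" using dim_span_eq_card_independent[OF ind] cS by simp
  have "dim {y \<in> UNIV. \<forall>x\<in>span S. orthogonal x y} + dim (span S) = dim (UNIV :: 'a set)"
    by (rule dim_subspace_orthogonal_to_vectors) auto
  then have dW: "dim W = CARD('k)" unfolding W_def using dS dims by simp
  have sW: "subspace W" unfolding W_def by (rule subspace_orthogonal_to_vectors)
  obtain \<phi> :: "'a \<Rightarrow> real^'k" where l\<phi>: "linear \<phi>" and \<phi>W: "\<phi> ` W = UNIV" and i\<phi>: "inj_on \<phi> W"
    using subspace_isomorphism[OF sW subspace_UNIV[where 'a="real^'k"]] dW by auto
  define E where "E = e \<bullet> e"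
  define zz where "zz x = (e \<bullet> x - \<alpha> x * (e \<bullet> b) + \<gamma> x * (e \<bullet> a)) / E" for x
  define P where "P x = x - \<alpha> x *\<^sub>R b + \<gamma> x *\<^sub>R a - zz x *\<^sub>R e" for x
  define f where "f x = (\<phi> (P x), \<alpha> x, \<gamma> x, zz x)" for x
  have lz: "linear zz" unfolding zz_def
    by (intro linearI) (simp_all add: linear_add[OF l\<alpha>] linear_add[OF l\<gamma>] linear_cmul[OF l\<alpha>] linear_cmul[OF l\<gamma>]
        inner_add_right algebra_simps add_divide_distrib diff_divide_distrib)
  have lP: "linear P" unfolding P_def
    by (intro linearI) (simp_all add: linear_add[OF l\<alpha>] linear_add[OF l\<gamma>] linear_add[OF lz]
        linear_cmul[OF l\<alpha>] linear_cmul[OF l\<gamma>] linear_cmul[OF lz] algebra_simps)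
  have lf: "linear f" unfolding f_def
    by (intro linearI) (simp_all add: linear_add[OF l\<alpha>] linear_add[OF l\<gamma>] linear_add[OF lz]
        linear_cmul[OF l\<alpha>] linear_cmul[OF l\<gamma>] linear_cmul[OF lz] linear_add[OF lP] linear_cmul[OF lP]
        linear_add[OF l\<phi>] linear_cmul[OF l\<phi>])
  have E0: "E \<noteq> 0" using ee E_def by simp
  have ze: "zz e = 1" unfolding zz_def E_def using v ee by simp
  have Pe: "P e = 0" unfolding P_def using v ze by simp
  have PW: "P x \<in> W" for x
    unfolding memW P_def
    using v E0 by (simp add: linear_diff[OF l\<alpha>] linear_diff[OF l\<gamma>] linear_add[OF l\<alpha>] linear_add[OF l\<gamma>]
        linear_cmul[OF l\<alpha>] linear_cmul[OF l\<gamma>] inner_diff_right inner_add_right zz_def E_def)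
  have fe: "f e = (0, 0, 0, 1)" unfolding f_def using Pe v ze linear_0[OF l\<phi>] by simp
  have hom: "f (br x y) = ab_heis3_br (f x) (f y)" for x y
    unfolding brb linear_cmul[OF lf] fe
    by (simp add: ab_heis3_br_def f_def rep zero_prod_def)
  have ker: "x = 0" if "f x = 0" for x
  proof -
    have h: "\<phi> (P x) = 0" "\<alpha> x = 0" "\<gamma> x = 0" "zz x = 0" using that unfolding f_def
      by (auto simp: zero_prod_def)
    then have "e \<bullet> x = 0" unfolding zz_def using E0 by simp
    then have xW: "x \<in> W" using h memW by simp
    have "P x = x" unfolding P_def using h by simp
    then have "\<phi> x = \<phi> 0" using h linear_0[OF l\<phi>] by simp
    then show ?thesis using inj_onD[OF i\<phi> _ xW] subspace_0[OF sW] by blast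
  qed
  have inj: "inj f"
  proof (rule injI)
    fix x y assume "f x = f y"
    then have "f (x - y) = 0" using linear_diff[OF lf] by simp
    then have "x - y = 0" by (rule ker)
    then show "x = y" by simp
  qed
  have surj: "surj f"
  proof -
    { fix u :: "(real^'k) \<times> real \<times> real \<times> real"
      obtain vv p q r where u: "u = (vv, p, q, r)" by (cases u) auto
      obtain w where w: "w \<in> W" "\<phi> w = vv" using \<phi>W by (metis UNIV_I imageE)
      have wv: "\<alpha> w = 0" "\<gamma> w = 0" "e \<bullet> w = 0" using w memW by auto
      define x where "x = w + p *\<^sub>R b - q *\<^sub>R a + r *\<^sub>R e"
      have ax: "\<alpha> x = p" and gx: "\<gamma> x = q" unfolding x_def using wv v
        by (simp_all add: linear_diff[OF l\<alpha>] linear_diff[OF l\<gamma>] linear_add[OF l\<alpha>] linear_add[OF l\<gamma>]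
          linear_cmul[OF l\<alpha>] linear_cmul[OF l\<gamma>])
      have zx: "zz x = r" unfolding zz_def ax gx unfolding x_def using wv E0
        by (simp add: inner_diff_right inner_add_right E_def[symmetric] field_simps)
      have "P x = w" unfolding P_def ax gx zx unfolding x_def by simp
      then have "f x = u" unfolding f_def u using ax gx zx w by simp
      then have "u \<in> range f" by blast }
    then show ?thesis by blast
  qed
  have "lie_iso br ab_heis3_br f" unfolding lie_iso_def using lf inj surj hom bij_def by blast
  then show ?thesis by blast
qed

theorem mainTheorem17:
  fixes br :: "'a::euclidean_space \<Rightarrow> 'a \<Rightarrow> 'a"
    and J :: "'a \<Rightarrow> 'a"
    and g :: "'a \<Rightarrow> 'a \<Rightarrow> real"
    and d :: nat
  assumes "lie_algebra br"
    and "nilpotent_lie br"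
    and "complex_structure br J"
    and "hermitian J g"
    and "DIM('a) = 2 * d"
    and "dim (derived br) = 1"
    and "CARD('k::finite) = 2 * d - 3"
  shows "pluriclosed br J g \<longleftrightarrow>
           (\<exists>f :: 'a \<Rightarrow> (real^'k) \<times> real \<times> real \<times> real. lie_iso br ab_heis3_br f)"
proof -
  obtain e \<beta> where s: "e \<noteq> 0" "bilinear \<beta>" "\<And>x y. br x y = \<beta> x y *\<^sub>R e"
    "\<And>x. \<beta> x e = 0" "\<And>x. \<beta> e x = 0" "\<And>x y. \<beta> (J x) (J y) = \<beta> x y"
    "\<And>x y. \<beta> x y = - \<beta> y x" "\<exists>a b. \<beta> a b = 1"
    using structure_lemma[OF assms(1,2,3,6)] by blast
  obtain a b where ab: "\<beta> a b = 1" using s(8) by blast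
  have lJ: "linear J" using assms(3) unfolding complex_structure_def by auto
  have "CARD('k) > 0" by simp
  then have dims: "DIM('a) = CARD('k) + 3" using assms(5,7) by linarith
  have "pluriclosed br J g \<longleftrightarrow> (\<forall>x0 x1 x2 x3. plk \<beta> x0 x1 x2 x3 = 0)"
    by (rule pluri_iff[OF s(1-6) lJ assms(4)])
  also have "\<dots> \<longleftrightarrow> (\<exists>f :: 'a \<Rightarrow> (real^'k) \<times> real \<times> real \<times> real. lie_iso br ab_heis3_br f)"
  proof
    assume "\<forall>x0 x1 x2 x3. plk \<beta> x0 x1 x2 x3 = 0"
    then show "\<exists>f :: 'a \<Rightarrow> (real^'k) \<times> real \<times> real \<times> real. lie_iso br ab_heis3_br f"
      using plk_imp_iso[OF s(1-4) s(7) ab _ dims] by blast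
  next
    assume "\<exists>f :: 'a \<Rightarrow> (real^'k) \<times> real \<times> real \<times> real. lie_iso br ab_heis3_br f"
    then obtain f :: "'a \<Rightarrow> (real^'k) \<times> real \<times> real \<times> real" where "lie_iso br ab_heis3_br f" by blast
    then show "\<forall>x0 x1 x2 x3. plk \<beta> x0 x1 x2 x3 = 0"
      using iso_imp_plk[OF s(1-3) ab] by blast
  qed
  finally show ?thesis .
qed

end
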